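(* Let $\Lambda$ be a lattice of rank $n$, $U=\Lambda\otimes\mathbb{R}$, and let $X\subset\Lambda$ be a linearly independent list forming a basis of $U$. For $A\subseteq X$ let $h(A)$ be the number of points of $\Lambda$ that are internal to the face $\mathcal{Z}(A)$ of the parallelepiped $\mathcal{Z}(X)$. Then for every $A\subseteq X$, $$h(A)=\sum_{B\subseteq A}(-1)^{|A|-|B|}m(B).$$
   Context: For a list $Y$, $\mathcal{Z}(Y)=\{\sum_{y\in Y}t_y y: 0\le t_y\le 1\}$; when $X$ is a basis, $\mathcal{Z}(X)$ is a parallelepiped and $\mathcal{Z}(A)$ is a face of it for each $A\subseteq X$ ($\mathcal{Z}(\emptyset)=\{0\}$). A point $p\in\Lambda\cap\mathcal{Z}(X)$ is internal to a face $F$ of $\mathcal{Z}(X)$ if $F$ is the smallest face of $\mathcal{Z}(X)$ containing $p$. For $B\subseteq X$, $m(B)=[\Lambda\cap\langle B\rangle_{\mathbb{R}}:\langle B\rangle_{\mathbb{Z}}]$, where $\langle B\rangle_{\mathbb{R}}$ and $\langle B\rangle_{\mathbb{Z}}$ are the real span and the subgroup generated by $B$. *)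

theory Defs
  imports "HOL-Analysis.Analysis"
begin

definition int_span :: "'a::real_vector set \<Rightarrow> 'a set" where
  "int_span B = {\<Sum>b\<in>B. of_int (c b) *\<^sub>R b | c. True}"

definition zonotope :: "'a::real_vector set \<Rightarrow> 'a set" where
  "zonotope Y = {\<Sum>y\<in>Y. t y *\<^sub>R y | t. \<forall>y\<in>Y. 0 \<le> t y \<and> t y \<le> 1}"

definition internal_to :: "'a::real_normed_vector \<Rightarrow> 'a set \<Rightarrow> 'a set \<Rightarrow> bool" where
  "internal_to p F P \<longleftrightarrow> F face_of P \<and> p \<in> F \<and>
     (\<forall>G. G face_of P \<and> p \<in> G \<longrightarrow> F \<subseteq> G)"

definition subgroup_index :: "'a::ab_group_add set \<Rightarrow> 'a set \<Rightarrow> nat" where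
  "subgroup_index H' H = card {{y \<in> H'. x - y \<in> H} | x. x \<in> H'}"

definition lattice_mult :: "'a::real_vector set \<Rightarrow> 'a set \<Rightarrow> nat" where
  "lattice_mult \<Lambda> B = subgroup_index (\<Lambda> \<inter> span B) (int_span B)"

end

theory Submission imports Defs begin

lemma coord_sum:
  assumes "independent X" "Y \<subseteq> X" "finite Y"
  shows "representation X (\<Sum>y\<in>Y. t y *\<^sub>R y) x = (if x \<in> Y then t x else 0)"
proof -
  have "representation X (\<Sum>y\<in>Y. t y *\<^sub>R y) x = (\<Sum>y\<in>Y. representation X (t y *\<^sub>R y) x)"
  proof -
    have "\<And>i. i \<in> Y \<Longrightarrow> t i *\<^sub>R i \<in> span X" using assms
      by (meson in_mono span_base span_mul)
    then show ?thesis using real_vector.representation_sum[OF assms(1), of Y "\<lambda>y. t y *\<^sub>R y"] by simp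
  qed
  also have "\<dots> = (\<Sum>y\<in>Y. if x = y then t y else 0)"
    apply (rule sum.cong, simp)
    using assms by (subst real_vector.representation_scale) (auto simp: real_vector.representation_basis real_vector.span_base)
  also have "\<dots> = (if x \<in> Y then t x else 0)" using assms(3) by simp
  finally show ?thesis .
qed

lemma span_all:
  fixes L :: "'a::euclidean_space set"
  assumes "independent L" "card L = DIM('a)"
  shows "span L = UNIV"
proof -
  have "finite L" using assms(2) DIM_positive card_ge_0_finite by metis
  then show ?thesis using card_eq_dim[of L UNIV] assms by (auto simp: dim_UNIV)
qed

lemma coord_expand:
  fixes X :: "'a::euclidean_space set"
  assumes "independent X" "span X = UNIV"
  shows "(\<Sum>x\<in>X. representation X p x *\<^sub>R x) = p"
  using real_vector.sum_representation_eq[OF assms(1), of p X] assms independent_imp_finite by auto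

lemma coord_outside:
  "x \<notin> X \<Longrightarrow> representation X p x = 0"
  using real_vector.representation_ne_zero by blast

lemma coord_eq_iff:
  fixes X :: "'a::euclidean_space set"
  assumes "independent X" "span X = UNIV"
  shows "p = q \<longleftrightarrow> (\<forall>x\<in>X. representation X p x = representation X q x)"
  using coord_expand[OF assms, of p] coord_expand[OF assms, of q] by (metis (no_types, lifting) sum.cong)

lemma coord_add:
  fixes X :: "'a::euclidean_space set"
  assumes "independent X" "span X = UNIV"
  shows "representation X (p + q) x = representation X p x + representation X q x"
  using real_vector.representation_add[OF assms(1)] assms(2) by auto

lemma coord_diff:
  fixes X :: "'a::euclidean_space set"
  assumes "independent X" "span X = UNIV"
  shows "representation X (p - q) x = representation X p x - representation X q x"
  using real_vector.representation_diff[OF assms(1)] assms(2) by auto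

lemma coord_scale:
  fixes X :: "'a::euclidean_space set"
  assumes "independent X" "span X = UNIV"
  shows "representation X (r *\<^sub>R p) x = r * representation X p x"
  using real_vector.representation_scale[OF assms(1)] assms(2) by auto

lemma coord_comb:
  fixes X :: "'a::euclidean_space set"
  assumes "independent X" "span X = UNIV"
  shows "representation X ((1-u) *\<^sub>R a + u *\<^sub>R b) x = (1-u) * representation X a x + u * representation X b x"
  by (simp add: coord_add[OF assms] coord_scale[OF assms])

lemma sum_expand_sub:
  fixes X :: "'a::euclidean_space set"
  assumes "independent X" "span X = UNIV" "Y \<subseteq> X" "\<forall>x\<in>X-Y. representation X p x = 0"
  shows "(\<Sum>y\<in>Y. representation X p y *\<^sub>R y) = p"
proof -
  have "finite X" using assms independent_imp_finite by auto
  have "(\<Sum>y\<in>Y. representation X p y *\<^sub>R y) = (\<Sum>y\<in>X. representation X p y *\<^sub>R y)"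
    using assms \<open>finite X\<close> by (intro sum.mono_neutral_left) auto
  then show ?thesis using coord_expand[OF assms(1,2)] by simp
qed

lemma zonotope_coord:
  fixes X :: "'a::euclidean_space set"
  assumes "independent X" "span X = UNIV" "Y \<subseteq> X"
  shows "zonotope Y = {p. \<forall>x\<in>X. (x\<in>Y \<longrightarrow> 0 \<le> representation X p x \<and> representation X p x \<le> 1)
                                 \<and> (x\<notin>Y \<longrightarrow> representation X p x = 0)}"
proof -
  have fY: "finite Y" using assms independent_imp_finite finite_subset by blast
  show ?thesis
  proof (intro set_eqI iffI)
    fix p assume "p \<in> zonotope Y"
    then obtain t where p: "p = (\<Sum>y\<in>Y. t y *\<^sub>R y)" "\<forall>y\<in>Y. 0 \<le> t y \<and> t y \<le> 1"
      unfolding zonotope_def by auto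
    show "p \<in> {p. \<forall>x\<in>X. (x\<in>Y \<longrightarrow> 0 \<le> representation X p x \<and> representation X p x \<le> 1)
                                 \<and> (x\<notin>Y \<longrightarrow> representation X p x = 0)}"
      using p coord_sum[OF assms(1,3) fY] by auto
  next
    fix p assume p: "p \<in> {p. \<forall>x\<in>X. (x\<in>Y \<longrightarrow> 0 \<le> representation X p x \<and> representation X p x \<le> 1)
                                 \<and> (x\<notin>Y \<longrightarrow> representation X p x = 0)}"
    have "p = (\<Sum>y\<in>Y. representation X p y *\<^sub>R y)"
      using sum_expand_sub[OF assms] p by auto
    then show "p \<in> zonotope Y" unfolding zonotope_def using p assms(3) by blast
  qed
qed

lemma face_lemma:
  fixes S :: "'a::euclidean_space set"
  assumes "convex S" "\<forall>i\<in>I. \<forall>x\<in>S. f i x \<ge> (0::real)"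
    "\<forall>i\<in>I. \<forall>a b u. f i ((1-u) *\<^sub>R a + u *\<^sub>R b) = (1-u) * f i a + u * f i b"
  shows "{x\<in>S. \<forall>i\<in>I. f i x = 0} face_of S"
  unfolding face_of_def
proof (intro conjI ballI impI)
  show "{x \<in> S. \<forall>i\<in>I. f i x = 0} \<subseteq> S" by auto
  show "convex {x \<in> S. \<forall>i\<in>I. f i x = 0}"
    unfolding convex_alt
  proof (intro ballI allI impI)
    fix x y and u::real assume xy: "x \<in> {x \<in> S. \<forall>i\<in>I. f i x = 0}" "y \<in> {x \<in> S. \<forall>i\<in>I. f i x = 0}" and u: "0 \<le> u \<and> u \<le> 1"
    then have "(1 - u) *\<^sub>R x + u *\<^sub>R y \<in> S" using assms(1) unfolding convex_alt by auto
    then show "(1 - u) *\<^sub>R x + u *\<^sub>R y \<in> {x \<in> S. \<forall>i\<in>I. f i x = 0}"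
      using xy assms(3) by auto
  qed
  fix a b x assume ab: "a \<in> S" "b \<in> S" and x: "x \<in> {x \<in> S. \<forall>i\<in>I. f i x = 0}" and seg: "x \<in> open_segment a b"
  then obtain u where u: "0 < u" "u < 1" "x = (1 - u) *\<^sub>R a + u *\<^sub>R b" by (auto simp: in_segment)
  have "\<forall>i\<in>I. f i a = 0 \<and> f i b = 0"
  proof
    fix i assume i: "i \<in> I"
    have "0 = (1-u) * f i a + u * f i b" using x u assms(3) i by auto
    moreover have "f i a \<ge> 0" "f i b \<ge> 0" using assms(2) i ab by auto
    ultimately show "f i a = 0 \<and> f i b = 0" using u
      by (smt (verit) mult_nonneg_nonneg mult_pos_pos)
  qed
  then show "a \<in> {x \<in> S. \<forall>i\<in>I. f i x = 0}" "b \<in> {x \<in> S. \<forall>i\<in>I. f i x = 0}" using ab by auto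
qed

lemma zonotope_convex:
  fixes X :: "'a::euclidean_space set"
  assumes "independent X" "span X = UNIV" "Y \<subseteq> X"
  shows "convex (zonotope Y)"
  unfolding zonotope_coord[OF assms] convex_alt
proof (intro ballI allI impI, simp only: mem_Collect_eq coord_comb[OF assms(1,2)], intro ballI conjI impI)
  fix x y and u :: real and z
  assume x: "\<forall>xa\<in>X. (xa \<in> Y \<longrightarrow> 0 \<le> representation X x xa \<and> representation X x xa \<le> 1) \<and> (xa \<notin> Y \<longrightarrow> representation X x xa = 0)"
    and y: "\<forall>xa\<in>X. (xa \<in> Y \<longrightarrow> 0 \<le> representation X y xa \<and> representation X y xa \<le> 1) \<and> (xa \<notin> Y \<longrightarrow> representation X y xa = 0)"
    and u: "0 \<le> u \<and> u \<le> 1" and z: "z \<in> X"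
  { assume "z \<in> Y"
    then have a: "0 \<le> representation X x z" "representation X x z \<le> 1" "0 \<le> representation X y z" "representation X y z \<le> 1"
      using x y z by auto
    have "0 \<le> (1 - u) * representation X x z + u * representation X y z"
      using a u by auto
    moreover have "(1 - u) * representation X x z + u * representation X y z \<le> (1-u) * 1 + u * 1"
      using a u by (intro add_mono mult_left_mono) auto
    ultimately show "0 \<le> (1 - u) * representation X x z + u * representation X y z"
         "(1 - u) * representation X x z + u * representation X y z \<le> 1" by auto }
  assume "z \<notin> Y" then show "(1 - u) * representation X x z + u * representation X y z = 0" using x y z by auto
qed

definition intpts :: "'a::real_vector set \<Rightarrow> 'a set \<Rightarrow> 'a set" where
  "intpts X B = {p. \<forall>x\<in>X. (x\<in>B \<longrightarrow> 0 < representation X p x \<and> representation X p x < 1)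
                                 \<and> (x\<notin>B \<longrightarrow> representation X p x = 0)}"

lemma internal_iff:
  fixes X :: "'a::euclidean_space set"
  assumes X: "independent X" "span X = UNIV" and A: "A \<subseteq> X"
  shows "internal_to p (zonotope A) (zonotope X) \<longleftrightarrow> p \<in> intpts X A"
proof -
  let ?c = "representation X"
  have fX: "finite X" using X independent_imp_finite by auto
  note ZX = zonotope_coord[OF X order_refl]
  note ZA = zonotope_coord[OF X A]
  have cvx: "convex (zonotope X)" using zonotope_convex[OF X order_refl] .
  have face_gen: "{x \<in> zonotope X. \<forall>i\<in>I. ?c x i = 0} face_of zonotope X" if "I \<subseteq> X" for I
    apply (rule face_lemma[OF cvx])
    using that by (auto simp: ZX coord_comb[OF X])
  have ZAface: "zonotope A = {x \<in> zonotope X. \<forall>i\<in>X-A. ?c x i = 0}"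
    using A by (auto simp: ZX ZA)
  have faceA: "zonotope A face_of zonotope X"
    using face_gen[of "X-A"] ZAface by auto
  show ?thesis
  proof
    assume int: "internal_to p (zonotope A) (zonotope X)"
    then have pA: "p \<in> zonotope A" and min: "\<And>G. G face_of zonotope X \<Longrightarrow> p \<in> G \<Longrightarrow> zonotope A \<subseteq> G"
      unfolding internal_to_def by auto
    have pc: "\<forall>x\<in>X. (x\<in>A \<longrightarrow> 0 \<le> ?c p x \<and> ?c p x \<le> 1) \<and> (x\<notin>A \<longrightarrow> ?c p x = 0)"
      using pA unfolding ZA by blast
    show "p \<in> intpts X A" unfolding intpts_def
    proof (intro CollectI ballI conjI impI)
      fix a assume a: "a \<in> X" "a \<in> A"
      show "0 < ?c p a"
      proof (rule ccontr)
        assume "\<not> 0 < ?c p a"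
        then have "?c p a = 0" using pc a by force
        then have "p \<in> {x \<in> zonotope X. \<forall>i\<in>insert a (X-A). ?c x i = 0}"
          using pA ZAface by auto
        then have "zonotope A \<subseteq> {x \<in> zonotope X. \<forall>i\<in>insert a (X-A). ?c x i = 0}"
          using min face_gen[of "insert a (X-A)"] a by auto
        moreover have "a \<in> zonotope A" using a A by (auto simp: ZA real_vector.representation_basis[OF X(1)])
        ultimately show False using a by (auto simp: real_vector.representation_basis[OF X(1)])
      qed
      show "?c p a < 1"
      proof (rule ccontr)
        assume "\<not> ?c p a < 1"
        then have pa: "?c p a = 1" using pc a by force
        have G: "{x \<in> zonotope X. \<forall>i\<in>{a}. 1 - ?c x i = 0} face_of zonotope X"
          apply (rule face_lemma[OF cvx])
          using a apply (auto simp: ZX)[1]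
          apply (intro ballI allI)
          apply (subst coord_comb[OF X])+
          by (simp add: algebra_simps)
        have "p \<in> {x \<in> zonotope X. \<forall>i\<in>{a}. 1 - ?c x i = 0}"
          using pA pa faceA face_of_imp_subset by fastforce
        then have "zonotope A \<subseteq> {x \<in> zonotope X. \<forall>i\<in>{a}. 1 - ?c x i = 0}"
          using min G by auto
        moreover have "0 \<in> zonotope A" by (auto simp: ZA real_vector.representation_zero)
        ultimately show False by (auto simp: real_vector.representation_zero)
      qed
    next
      fix x assume "x \<in> X" "x \<notin> A" then show "?c p x = 0" using pc by auto
    qed
  next
    assume pI: "p \<in> intpts X A"
    have pc: "\<forall>x\<in>X. (x\<in>A \<longrightarrow> 0 < ?c p x \<and> ?c p x < 1) \<and> (x\<notin>A \<longrightarrow> ?c p x = 0)"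
      using pI unfolding intpts_def by blast
    have pA: "p \<in> zonotope A" unfolding ZA using pc by (auto simp: less_imp_le)
    show "internal_to p (zonotope A) (zonotope X)"
      unfolding internal_to_def
    proof (intro conjI allI impI faceA pA subsetI)
      fix G q assume G: "G face_of zonotope X \<and> p \<in> G" and q: "q \<in> zonotope A"
      show "q \<in> G"
      proof (cases "q = p")
        case True then show ?thesis using G by auto
      next
        case False
        have qc: "\<forall>x\<in>X. (x\<in>A \<longrightarrow> 0 \<le> ?c q x \<and> ?c q x \<le> 1) \<and> (x\<notin>A \<longrightarrow> ?c q x = 0)"
          using q unfolding ZA by blast
        have "A \<noteq> {}"
        proof
          assume "A = {}"
          then have "\<forall>x\<in>X. ?c q x = ?c p x" using pc qc by auto
          then show False using False coord_eq_iff[OF X, of q p] by blast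
        qed
        define \<epsilon> where "\<epsilon> = Min ((\<lambda>a. min (?c p a) (1 - ?c p a)) ` A)"
        have fA: "finite A" using fX A finite_subset by auto
        have epos: "\<epsilon> > 0" unfolding \<epsilon>_def using \<open>A \<noteq> {}\<close> fA pI A
          by (subst Min_gr_iff) (use pc in auto)
        have ele: "\<epsilon> \<le> ?c p a" "\<epsilon> \<le> 1 - ?c p a" if "a \<in> A" for a
          unfolding \<epsilon>_def using that fA by (auto intro!: Min.coboundedI[THEN order_trans])
        define q' where "q' = p + \<epsilon> *\<^sub>R (p - q)"
        have cq': "?c q' i = ?c p i + \<epsilon> * (?c p i - ?c q i)" for i
          unfolding q'_def by (simp add: coord_add[OF X] coord_scale[OF X] coord_diff[OF X])
        have q'A: "q' \<in> zonotope A"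
          unfolding ZA
        proof (intro CollectI ballI conjI impI)
          fix i assume i: "i \<in> X" "i \<in> A"
          have b: "0 \<le> ?c q i" "?c q i \<le> 1" "0 < ?c p i" "?c p i < 1" using qc pc i by auto
          have e: "\<epsilon> \<le> ?c p i" "\<epsilon> \<le> 1 - ?c p i" using ele i by auto
          have "\<epsilon> * (?c p i - ?c q i) \<ge> \<epsilon> * (-1)" using b epos by (intro mult_left_mono) auto
          moreover have "\<epsilon> * (?c p i - ?c q i) \<le> \<epsilon> * 1" using b epos by (intro mult_left_mono) auto
          ultimately show "0 \<le> ?c q' i" "?c q' i \<le> 1" using e unfolding cq' by auto
        next
          fix i assume i: "i \<in> X" "i \<notin> A"
          then show "?c q' i = 0" using qc pc unfolding cq' by auto
        qed
        define u where "u = 1 / (1 + \<epsilon>)"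
        have u: "0 < u" "u < 1" unfolding u_def using epos by auto
        have "(1 - u) *\<^sub>R q + u *\<^sub>R q' = ((1 - u) - u * \<epsilon>) *\<^sub>R q + (u * (1 + \<epsilon>)) *\<^sub>R p"
          unfolding q'_def by (simp add: algebra_simps)
        also have "u * (1 + \<epsilon>) = 1" unfolding u_def using epos by auto
        also have "(1 - u) - u * \<epsilon> = 0" using \<open>u * (1 + \<epsilon>) = 1\<close> by (simp add: algebra_simps)
        finally have peq: "p = (1 - u) *\<^sub>R q + u *\<^sub>R q'" by simp
        have d: "q' - q = (1+\<epsilon>) *\<^sub>R (p - q)" unfolding q'_def by (simp add: algebra_simps)
        have "(1+\<epsilon>) *\<^sub>R (p - q) \<noteq> 0" using False epos by simp
        then have "q \<noteq> q'" using d by auto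
        then have "p \<in> open_segment q q'" using peq u by (auto simp: in_segment)
        moreover have "q \<in> zonotope X" "q' \<in> zonotope X" using q q'A faceA face_of_imp_subset by auto
        ultimately show "q \<in> G" using G unfolding face_of_def by blast
      qed
    qed
  qed
qed


lemma int_span_coord:
  fixes X :: "'a::euclidean_space set"
  assumes X: "independent X" "span X = UNIV" and A: "A \<subseteq> X"
  shows "int_span A = {y. \<forall>x\<in>X. (x\<in>A \<longrightarrow> representation X y x \<in> \<int>) \<and> (x\<notin>A \<longrightarrow> representation X y x = 0)}"
proof (intro set_eqI iffI)
  have fA: "finite A" using X A independent_imp_finite finite_subset by blast
  fix y
  { assume "y \<in> int_span A"
    then obtain c where y: "y = (\<Sum>b\<in>A. of_int (c b) *\<^sub>R b)" unfolding int_span_def by auto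
    show "y \<in> {y. \<forall>x\<in>X. (x\<in>A \<longrightarrow> representation X y x \<in> \<int>) \<and> (x\<notin>A \<longrightarrow> representation X y x = 0)}"
      unfolding y using coord_sum[OF X(1) A fA, of "\<lambda>b. of_int (c b)"] by auto }
  { assume yc: "y \<in> {y. \<forall>x\<in>X. (x\<in>A \<longrightarrow> representation X y x \<in> \<int>) \<and> (x\<notin>A \<longrightarrow> representation X y x = 0)}"
    have "y = (\<Sum>b\<in>A. representation X y b *\<^sub>R b)" using sum_expand_sub[OF X A] yc by auto
    also have "\<dots> = (\<Sum>b\<in>A. of_int \<lfloor>representation X y b\<rfloor> *\<^sub>R b)"
      apply (rule sum.cong[OF refl]) using yc A by auto
    finally have e: "y = (\<Sum>b\<in>A. of_int \<lfloor>representation X y b\<rfloor> *\<^sub>R b)" .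
    show "y \<in> int_span A" unfolding int_span_def mem_Collect_eq
      by (rule exI[where x="\<lambda>b. \<lfloor>representation X y b\<rfloor>"]) (rule conjI[OF e TrueI]) }
qed

lemma span_coord:
  fixes X :: "'a::euclidean_space set"
  assumes X: "independent X" "span X = UNIV" and A: "A \<subseteq> X"
  shows "span A = {y. \<forall>x\<in>X-A. representation X y x = 0}"
proof (intro set_eqI iffI)
  have fA: "finite A" using X A independent_imp_finite finite_subset by blast
  fix y
  { assume "y \<in> span A"
    then obtain u where y: "y = (\<Sum>b\<in>A. u b *\<^sub>R b)" using span_finite[OF fA] by auto
    show "y \<in> {y. \<forall>x\<in>X-A. representation X y x = 0}"
      unfolding y using coord_sum[OF X(1) A fA, of u] by auto }
  { assume yc: "y \<in> {y. \<forall>x\<in>X-A. representation X y x = 0}"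
    have "y = (\<Sum>b\<in>A. representation X y b *\<^sub>R b)" using sum_expand_sub[OF X A] yc by auto
    then show "y \<in> span A" using span_finite[OF fA] by auto }
qed

lemma lattice_coord:
  fixes L :: "'a::euclidean_space set"
  assumes L: "independent L" "span L = UNIV"
  shows "int_span L = {y. \<forall>x\<in>L. representation L y x \<in> \<int>}"
  using int_span_coord[OF L order_refl] by auto

lemma lattice_diff:
  fixes L :: "'a::euclidean_space set"
  assumes L: "independent L" "span L = UNIV" and "x \<in> int_span L" "y \<in> int_span L"
  shows "x - y \<in> int_span L"
  using assms unfolding lattice_coord[OF L] by (auto simp: coord_diff[OF L])

lemma int_span_sub_lattice:
  fixes L :: "'a::euclidean_space set"
  assumes L: "independent L" "span L = UNIV" and A: "A \<subseteq> int_span L" "finite A"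
  shows "int_span A \<subseteq> int_span L"
proof
  fix y assume "y \<in> int_span A"
  then obtain c where y: "y = (\<Sum>b\<in>A. of_int (c b) *\<^sub>R b)" unfolding int_span_def by auto
  have "representation L y x \<in> \<int>" if "x \<in> L" for x
  proof -
    have "representation L y x = (\<Sum>b\<in>A. representation L (of_int (c b) *\<^sub>R b) x)"
      unfolding y using real_vector.representation_sum[OF L(1), of A] L(2) by auto
    also have "\<dots> = (\<Sum>b\<in>A. of_int (c b) * representation L b x)"
      by (simp add: coord_scale[OF L])
    also have "\<dots> \<in> \<int>" using A that unfolding lattice_coord[OF L]
      by (intro Ints_sum Ints_mult) auto
    finally show ?thesis .
  qed
  then show "y \<in> int_span L" unfolding lattice_coord[OF L] by auto
qed

lemma frac_eq:
  fixes a b :: real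
  assumes "0 \<le> a" "a < 1" "0 \<le> b" "b < 1" "a - b \<in> \<int>"
  shows "a = b"
proof -
  obtain k where k: "a - b = of_int k" using assms(5) Ints_cases by blast
  have "-1 < k" "k < 1" using k assms by (smt (verit) of_int_less_iff of_int_minus of_int_1)+
  then have "k = 0" by auto
  then show ?thesis using k by simp
qed

definition halfbox :: "'a::real_vector set \<Rightarrow> 'a set \<Rightarrow> 'a set" where
  "halfbox X B = {p. \<forall>x\<in>X. (x\<in>B \<longrightarrow> 0 \<le> representation X p x \<and> representation X p x < 1)
                                 \<and> (x\<notin>B \<longrightarrow> representation X p x = 0)}"

lemma mult_halfbox:
  fixes L X A :: "'a::euclidean_space set"
  assumes L: "independent L" "span L = UNIV"
    and X: "independent X" "span X = UNIV" "X \<subseteq> int_span L" and A: "A \<subseteq> X"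
  shows "lattice_mult (int_span L) A = card (int_span L \<inter> halfbox X A)"
proof -
  let ?c = "representation X"
  let ?L = "int_span L"
  let ?H' = "?L \<inter> span A"
  let ?H = "int_span A"
  define cos where "cos x = {y \<in> ?H'. x - y \<in> ?H}" for x
  have fX: "finite X" using X independent_imp_finite by auto
  have fA: "finite A" using fX A finite_subset by blast
  note HC = int_span_coord[OF X(1,2) A]
  note SC = span_coord[OF X(1,2) A]
  have HL: "?H \<subseteq> ?L" using int_span_sub_lattice[OF L] X(3) A fA by auto
  have Hdiff: "a - b \<in> ?H" if "a \<in> ?H" "b \<in> ?H" for a b
    using that unfolding HC by (auto simp: coord_diff[OF X(1,2)])
  have H0: "0 \<in> ?H" unfolding HC by (auto simp: real_vector.representation_zero)
  have si: "subgroup_index ?H' ?H = card (cos ` ?H')"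
    unfolding subgroup_index_def Setcompr_eq_image cos_def[abs_def] ..
  have bij: "bij_betw cos (?L \<inter> halfbox X A) (cos ` ?H')"
    unfolding bij_betw_def
  proof (intro conjI)
    have sub: "?L \<inter> halfbox X A \<subseteq> ?H'"
      unfolding SC halfbox_def by auto
    show "inj_on cos (?L \<inter> halfbox X A)"
    proof (rule inj_onI)
      fix q q' assume q: "q \<in> ?L \<inter> halfbox X A" and q': "q' \<in> ?L \<inter> halfbox X A" and eq: "cos q = cos q'"
      have qH': "q \<in> ?H'" using sub q by blast
      have "q \<in> cos q" unfolding cos_def using qH' H0 by simp
      then have "q \<in> cos q'" using eq by simp
      then have "q' - q \<in> ?H" unfolding cos_def by simp
      then have d: "\<forall>x\<in>A. ?c q' x - ?c q x \<in> \<int>" using A unfolding HC by (auto simp: coord_diff[OF X(1,2)])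
      have "?c q' x = ?c q x" if "x \<in> X" for x
      proof (cases "x \<in> A")
        case True
        then show ?thesis using q q' d that unfolding halfbox_def by (intro frac_eq) auto
      next
        case False
        then show ?thesis using q q' that unfolding halfbox_def by auto
      qed
      then show "q = q'" using coord_eq_iff[OF X(1,2)] by metis
    qed
    show "cos ` (?L \<inter> halfbox X A) = cos ` ?H'"
    proof
      show "cos ` (?L \<inter> halfbox X A) \<subseteq> cos ` ?H'" using sub by auto
      show "cos ` ?H' \<subseteq> cos ` (?L \<inter> halfbox X A)"
      proof
        fix z assume "z \<in> cos ` ?H'"
        then obtain x where x: "x \<in> ?H'" and z: "z = cos x" by auto
        define s where "s = (\<Sum>a\<in>A. of_int \<lfloor>?c x a\<rfloor> *\<^sub>R a)"
        have sH: "s \<in> ?H" unfolding s_def int_span_def mem_Collect_eq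
          by (rule exI[where x="\<lambda>b. \<lfloor>?c x b\<rfloor>"]) simp
        define q where "q = x - s"
        have cs: "?c s i = (if i \<in> A then of_int \<lfloor>?c x i\<rfloor> else 0)" for i
          unfolding s_def by (rule coord_sum[OF X(1) A fA])
        have qL: "q \<in> ?L" unfolding q_def using lattice_diff[OF L] x sH HL by auto
        have xc: "\<forall>i\<in>X-A. ?c x i = 0" using x unfolding SC by auto
        have cq: "?c q i = ?c x i - (if i \<in> A then of_int \<lfloor>?c x i\<rfloor> else 0)" for i
          unfolding q_def coord_diff[OF X(1,2)] cs ..
        have qB: "q \<in> halfbox X A" unfolding halfbox_def
        proof (intro CollectI ballI conjI impI)
          fix i assume "i \<in> X" "i \<in> A"
          then show "0 \<le> ?c q i" "?c q i < 1" unfolding cq by simp_all linarith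
        next
          fix i assume "i \<in> X" "i \<notin> A"
          then show "?c q i = 0" unfolding cq using xc by simp
        qed
        have "cos q = cos x"
        proof -
          have "x - y \<in> ?H \<longleftrightarrow> q - y \<in> ?H" for y
          proof
            assume "x - y \<in> ?H" then have "(x - y) - s \<in> ?H" using sH Hdiff by auto
            then show "q - y \<in> ?H" unfolding q_def by (simp add: algebra_simps)
          next
            assume "q - y \<in> ?H" then have "(q - y) - (-s) \<in> ?H" using sH Hdiff H0
              by (metis diff_0)
            then show "x - y \<in> ?H" unfolding q_def by (simp add: algebra_simps)
          qed
          then show ?thesis unfolding cos_def by auto
        qed
        then show "z \<in> cos ` (?L \<inter> halfbox X A)" using z qL qB by auto
      qed
    qed
  qed
  show ?thesis unfolding lattice_mult_def si using bij_betw_same_card[OF bij] by simp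
qed




lemma lattice_box_finite:
  fixes L X :: "'a::euclidean_space set"
  assumes L: "independent L" "span L = UNIV"
    and X: "independent X" "span X = UNIV"
  shows "finite (int_span L \<inter> zonotope X)"
proof -
  have fX: "finite X" using X independent_imp_finite by auto
  have fL: "finite L" using L independent_imp_finite by auto
  define M where "M b = (\<Sum>x\<in>X. \<bar>representation L x b\<bar>)" for b
  define T where "T b = (of_int ` {-\<lceil>M b\<rceil>..\<lceil>M b\<rceil>} :: real set)" for b
  define f where "f p = restrict (\<lambda>b. representation L p b) L" for p
  have bound: "\<bar>representation L p b\<bar> \<le> M b" if pZ: "p \<in> zonotope X" for p b
  proof -
    obtain t where p: "p = (\<Sum>x\<in>X. t x *\<^sub>R x)" and t: "\<forall>x\<in>X. 0 \<le> t x \<and> t x \<le> 1"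
      using pZ unfolding zonotope_def by auto
    have "representation L p b = (\<Sum>x\<in>X. representation L (t x *\<^sub>R x) b)"
      unfolding p using real_vector.representation_sum[OF L(1), of X] L(2) by auto
    also have "\<dots> = (\<Sum>x\<in>X. t x * representation L x b)"
      by (simp add: coord_scale[OF L])
    finally have "\<bar>representation L p b\<bar> \<le> (\<Sum>x\<in>X. \<bar>t x * representation L x b\<bar>)"
      by (simp add: sum_abs)
    also have "\<dots> \<le> M b" unfolding M_def
    proof (rule sum_mono)
      fix x assume "x \<in> X"
      then have "\<bar>t x\<bar> \<le> 1" using t by auto
      then show "\<bar>t x * representation L x b\<bar> \<le> \<bar>representation L x b\<bar>"
        by (simp add: abs_mult mult_left_le_one_le)
    qed
    finally show ?thesis .
  qed
  show ?thesis
  proof (rule inj_on_finite[where f=f])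
    show "inj_on f (int_span L \<inter> zonotope X)"
    proof (rule inj_onI)
      fix p q assume "p \<in> int_span L \<inter> zonotope X" "q \<in> int_span L \<inter> zonotope X" and eq: "f p = f q"
      have "\<forall>b\<in>L. representation L p b = representation L q b"
      proof
        fix b assume b: "b \<in> L"
        have "f p b = f q b" using eq by simp
        then show "representation L p b = representation L q b" using b unfolding f_def by simp
      qed
      then show "p = q" using coord_eq_iff[OF L] by blast
    qed
    show "f ` (int_span L \<inter> zonotope X) \<subseteq> PiE L T"
    proof
      fix z assume "z \<in> f ` (int_span L \<inter> zonotope X)"
      then obtain p where p: "p \<in> int_span L" "p \<in> zonotope X" and z: "z = f p" by auto
      have "representation L p b \<in> T b" if b: "b \<in> L" for b
      proof -
        have "representation L p b \<in> \<int>" using p b unfolding lattice_coord[OF L] by auto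
        then obtain k where k: "representation L p b = of_int k" using Ints_cases by blast
        have "of_int \<bar>k\<bar> \<le> M b" using bound[OF p(2), of b] k by simp
        moreover have "M b \<le> of_int \<lceil>M b\<rceil>" by (rule le_of_int_ceiling)
        ultimately have "(of_int \<bar>k\<bar> :: real) \<le> of_int \<lceil>M b\<rceil>" by linarith
        then have "\<bar>k\<bar> \<le> \<lceil>M b\<rceil>" by (simp only: of_int_le_iff)
        then have "k \<in> {-\<lceil>M b\<rceil>..\<lceil>M b\<rceil>}" by auto
        then show ?thesis unfolding T_def k by blast
      qed
      then show "z \<in> PiE L T" unfolding z f_def by auto
    qed
    show "finite (PiE L T)" using fL unfolding T_def by (intro finite_PiE) auto
  qed
qed

lemma intpts_sub_zonotope:
  fixes X :: "'a::euclidean_space set"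
  assumes X: "independent X" "span X = UNIV" and B: "B \<subseteq> X"
  shows "intpts X B \<subseteq> zonotope X"
  unfolding zonotope_coord[OF X order_refl] intpts_def by auto

lemma halfbox_union:
  assumes A: "A \<subseteq> X"
  shows "halfbox X A = (\<Union>B\<in>Pow A. intpts X B)"
proof (intro set_eqI iffI)
  fix p assume p: "p \<in> halfbox X A"
  let ?c = "representation X p"
  let ?B = "{x\<in>A. ?c x \<noteq> 0}"
  have pc: "\<forall>x\<in>X. (x\<in>A \<longrightarrow> 0 \<le> ?c x \<and> ?c x < 1) \<and> (x\<notin>A \<longrightarrow> ?c x = 0)"
    using p unfolding halfbox_def by blast
  have "p \<in> intpts X ?B" unfolding intpts_def
  proof (intro CollectI ballI conjI impI)
    fix x assume x: "x \<in> X" "x \<in> ?B"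
    then have "x \<in> A" "?c x \<noteq> 0" by auto
    then have "0 \<le> ?c x" "?c x < 1" "?c x \<noteq> 0" using pc x(1) by auto
    then show "0 < ?c x" "?c x < 1" by linarith+
  next
    fix x assume x: "x \<in> X" "x \<notin> ?B"
    show "?c x = 0"
    proof (cases "x \<in> A")
      case True then show ?thesis using x by blast
    next
      case False then show ?thesis using pc x(1) by blast
    qed
  qed
  moreover have "?B \<in> Pow A" by auto
  ultimately show "p \<in> (\<Union>B\<in>Pow A. intpts X B)" by (rule UN_I[rotated])
next
  fix p assume "p \<in> (\<Union>B\<in>Pow A. intpts X B)"
  then obtain B where B: "B \<in> Pow A" "p \<in> intpts X B" by (rule UN_E)
  then have B: "B \<subseteq> A" "p \<in> intpts X B" by auto
  let ?c = "representation X p"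
  have pc: "\<forall>x\<in>X. (x\<in>B \<longrightarrow> 0 < ?c x \<and> ?c x < 1) \<and> (x\<notin>B \<longrightarrow> ?c x = 0)"
    using B(2) unfolding intpts_def by blast
  have "\<forall>x\<in>X. (x\<in>A \<longrightarrow> 0 \<le> ?c x \<and> ?c x < 1) \<and> (x\<notin>A \<longrightarrow> ?c x = 0)"
  proof (intro ballI conjI impI)
    fix x assume x: "x \<in> X" "x \<in> A"
    show "0 \<le> ?c x" using pc x(1) by (cases "x \<in> B") auto
    show "?c x < 1" using pc x(1) by (cases "x \<in> B") auto
  next
    fix x assume x: "x \<in> X" "x \<notin> A"
    then have "x \<notin> B" using B(1) by blast
    then show "?c x = 0" using pc x(1) by blast
  qed
  then show "p \<in> halfbox X A" unfolding halfbox_def by blast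
qed

lemma intpts_support:
  assumes "B \<subseteq> X" "p \<in> intpts X B"
  shows "B = {x\<in>X. representation X p x \<noteq> 0}"
proof -
  have pc: "\<forall>x\<in>X. (x\<in>B \<longrightarrow> 0 < representation X p x \<and> representation X p x < 1) \<and> (x\<notin>B \<longrightarrow> representation X p x = 0)"
    using assms(2) unfolding intpts_def by blast
  show ?thesis
  proof (intro set_eqI iffI)
    fix x assume "x \<in> B"
    then have "x \<in> X" using assms(1) by blast
    then have "0 < representation X p x" using pc \<open>x \<in> B\<close> by blast
    then show "x \<in> {x\<in>X. representation X p x \<noteq> 0}" using \<open>x \<in> X\<close> by simp
  next
    fix x assume "x \<in> {x\<in>X. representation X p x \<noteq> 0}"
    then have "x \<in> X" "representation X p x \<noteq> 0" by auto
    then show "x \<in> B" using pc by blast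
  qed
qed

lemma intpts_disjoint:
  assumes "B \<subseteq> X" "B' \<subseteq> X" "B \<noteq> B'"
  shows "intpts X B \<inter> intpts X B' = {}"
proof (rule ccontr)
  assume "intpts X B \<inter> intpts X B' \<noteq> {}"
  then obtain p where p: "p \<in> intpts X B" "p \<in> intpts X B'" by blast
  have "B = {x\<in>X. representation X p x \<noteq> 0}" by (rule intpts_support[OF assms(1) p(1)])
  moreover have "B' = {x\<in>X. representation X p x \<noteq> 0}" by (rule intpts_support[OF assms(2) p(2)])
  ultimately show False using assms(3) by simp
qed

lemma halfbox_card:
  fixes L X A :: "'a::euclidean_space set"
  assumes L: "independent L" "span L = UNIV"
    and X: "independent X" "span X = UNIV" and A: "A \<subseteq> X"
  shows "card (int_span L \<inter> halfbox X A) = (\<Sum>B\<in>Pow A. card (int_span L \<inter> intpts X B))"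
proof -
  have fX: "finite X" using X independent_imp_finite by auto
  have fA: "finite A" using fX A finite_subset by blast
  have "int_span L \<inter> halfbox X A = (\<Union>B\<in>Pow A. int_span L \<inter> intpts X B)"
    using halfbox_union[OF A] by auto
  moreover have "card (\<Union>B\<in>Pow A. int_span L \<inter> intpts X B) = (\<Sum>B\<in>Pow A. card (int_span L \<inter> intpts X B))"
  proof (rule card_UN_disjoint)
    show "finite (Pow A)" using fA by simp
    show "\<forall>B\<in>Pow A. finite (int_span L \<inter> intpts X B)"
    proof
      fix B assume "B \<in> Pow A"
      then have "int_span L \<inter> intpts X B \<subseteq> int_span L \<inter> zonotope X"
        using intpts_sub_zonotope[OF X, of B] A by auto
      then show "finite (int_span L \<inter> intpts X B)"
        using lattice_box_finite[OF L X] finite_subset by blast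
    qed
    show "\<forall>B\<in>Pow A. \<forall>B'\<in>Pow A. B \<noteq> B' \<longrightarrow> (int_span L \<inter> intpts X B) \<inter> (int_span L \<inter> intpts X B') = {}"
    proof (intro ballI impI)
      fix B B' assume "B \<in> Pow A" "B' \<in> Pow A" "B \<noteq> B'"
      then have "intpts X B \<inter> intpts X B' = {}" using A by (intro intpts_disjoint) auto
      then show "(int_span L \<inter> intpts X B) \<inter> (int_span L \<inter> intpts X B') = {}" by blast
    qed
  qed
  ultimately show ?thesis by simp
qed

theorem lemma4p3:
  fixes L X A :: "'a::euclidean_space set"
  assumes "independent L" and "card L = DIM('a)"
    and "X \<subseteq> int_span L" and "independent X" and "span X = UNIV"
    and "A \<subseteq> X"
  shows "int (card {p \<in> int_span L \<inter> zonotope X. internal_to p (zonotope A) (zonotope X)})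
         = (\<Sum>B\<in>Pow A. (-1) ^ (card A - card B) * int (lattice_mult (int_span L) B))"
proof -
  have L: "independent L" "span L = UNIV" using assms(1,2) span_all by auto
  have X: "independent X" "span X = UNIV" using assms by auto
  have fX: "finite X" using X independent_imp_finite by auto
  have fA: "finite A" using fX assms(6) finite_subset by blast
  define h where "h B = int (card (int_span L \<inter> intpts X B))" for B
  define f where "f S = (if S \<subseteq> X then h S else 0)" for S
  define g where "g S = sum f (Pow S)" for S
  have lhs: "{p \<in> int_span L \<inter> zonotope X. internal_to p (zonotope A) (zonotope X)} = int_span L \<inter> intpts X A"
    using internal_iff[OF X assms(6)] intpts_sub_zonotope[OF X assms(6)] by auto
  have gT: "g T = int (lattice_mult (int_span L) T)" if "T \<subseteq> A" for T
  proof -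
    have "g T = (\<Sum>C\<in>Pow T. h C)" unfolding g_def f_def
      using that assms(6) by (intro sum.cong) auto
    also have "\<dots> = int (card (int_span L \<inter> halfbox X T))"
      unfolding h_def halfbox_card[OF L X order_trans[OF that assms(6)]] by simp
    also have "\<dots> = int (lattice_mult (int_span L) T)"
      using mult_halfbox[OF L X assms(3) order_trans[OF that assms(6)]] by simp
    finally show ?thesis .
  qed
  have "f A = (\<Sum>T\<in>Pow A. (-1) ^ (card A - card T) * g T)"
    by (rule inclusion_exclusion_mobius) (auto simp: g_def fA)
  also have "\<dots> = (\<Sum>B\<in>Pow A. (-1) ^ (card A - card B) * int (lattice_mult (int_span L) B))"
    by (intro sum.cong) (auto simp: gT)
  finally show ?thesis using lhs assms(6) unfolding f_def h_def by simp
qed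

end
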